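(* Let $(\gamma_j)_{j\ge 1}$ be a sequence of reals with $1\ge\gamma_1\ge\gamma_2\ge\cdots\ge 0$, and consider the associated product weights $\gamma_{\mathfrak u}=\prod_{j\in\mathfrak u}\gamma_j$. The following assertions are equivalent: (1) the centered regular grid with different mesh-sizes achieves quasi polynomial tractability (QPT) for the $\boldsymbol\gamma$-weighted star discrepancy; (2) it achieves polynomial tractability (PT); (3) it achieves strong polynomial tractability (SPT); (4) the sequence $(\gamma_j)_{j\ge1}$ is eventually zero, i.e. there is $\tau$ with $\gamma_j=0$ for all $j>\tau$.
   Context: For $d\in\mathbb N$ write $[d]=\{1,\dots,d\}$. For mesh-sizes $m_1,\dots,m_d\in\mathbb N$, the centered regular grid is $\Gamma_{m_1,\dots,m_d}=\{(\frac{2\ell_1+1}{2m_1},\dots,\frac{2\ell_d+1}{2m_d}) : \ell_j\in\{0,1,\dots,m_j-1\}\text{ for } j=1,\dots,d\}$, an $N$-point set with $N=m_1\cdots m_d$. For an $N$-point set $\mathcal P_d\subset[0,1)^d$ with real coefficients $\mathcal A(\mathcal P_d)=\{a_{\boldsymbol x}:\boldsymbol x\in\mathcal P_d\}$, the local discrepancy is $\Delta_{\mathcal P_d,\mathcal A(\mathcal P_d)}(\boldsymbol\alpha)=\sum_{\boldsymbol x\in\mathcal P_d}a_{\boldsymbol x}\mathbf 1_{[\boldsymbol 0,\boldsymbol\alpha)}(\boldsymbol x)-\prod_{j=1}^d\alpha_j$ for $\boldsymbol\alpha\in[0,1]^d$, where $[\boldsymbol 0,\boldsymbol\alpha)=[0,\alpha_1)\times\cdots\times[0,\alpha_d)$.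 Given weights $\gamma_{\mathfrak u}\in[0,1]$, the $\boldsymbol\gamma$-weighted star discrepancy is $D^*_{N,\boldsymbol\gamma}(\mathcal P_d,\mathcal A(\mathcal P_d))=\sup_{\boldsymbol\alpha\in[0,1]^d}\max_{\emptyset\ne\mathfrak u\subseteq[d]}\gamma_{\mathfrak u}|\Delta_{\mathcal P_d,\mathcal A(\mathcal P_d)}((\boldsymbol\alpha_{\mathfrak u},\boldsymbol 1))|$, where $(\boldsymbol\alpha_{\mathfrak u},\boldsymbol 1)=(y_1,\dots,y_d)$ with $y_j=\alpha_j$ for $j\in\mathfrak u$ and $y_j=1$ otherwise. For $\varepsilon\in(0,1)$, $d\in\mathbb N$, let $N_{\boldsymbol\gamma}(\varepsilon,d)=\min\{N: N=m_1\cdots m_d \text{ and there exist coefficients } \mathcal A(\Gamma_{m_1,\dots,m_d}) \text{ with } D^*_{N,\boldsymbol\gamma}(\Gamma_{m_1,\dots,m_d},\mathcal A(\Gamma_{m_1,\dots,m_d}))\le\varepsilon\}$. QPT means there exist $C,t>0$ with $N_{\boldsymbol\gamma}(\varepsilon,d)\le C\exp(t(1+\log d)(1+\log\varepsilon^{-1}))$ for all $d\in\mathbb N$, $\varepsilon\in(0,1)$. PT means there exist $C,\tau>0$ and $\sigma\ge0$ with $N_{\boldsymbol\gamma}(\varepsilon,d)\le C\varepsilon^{-\tau}d^{\sigma}$ for all $d\in\mathbb N$, $\varepsilon\in(0,1)$; SPT means this holds with $\sigma=0$. *)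

theory Defs
  imports "HOL-Analysis.Analysis"
begin

text \<open>Points of [0,1)^d are modelled as functions nat => real; only the
coordinates j in {1..d} are meaningful (all other coordinates are set to 0).\<close>

definition centered_grid :: "nat \<Rightarrow> (nat \<Rightarrow> nat) \<Rightarrow> (nat \<Rightarrow> real) set" where
  "centered_grid d m =
     (\<lambda>l j. if j \<in> {1..d} then (2 * real (l j) + 1) / (2 * real (m j)) else 0)
       ` (PiE {1..d} (\<lambda>j. {..<m j}))"

definition local_disc :: "nat \<Rightarrow> (nat \<Rightarrow> real) set \<Rightarrow> ((nat \<Rightarrow> real) \<Rightarrow> real)
                          \<Rightarrow> (nat \<Rightarrow> real) \<Rightarrow> real" where
  "local_disc d P a \<alpha> =
     (\<Sum>x\<in>P. a x * (if (\<forall>j\<in>{1..d}. 0 \<le> x j \<and> x j < \<alpha> j) then 1 else 0))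
     - (\<Prod>j\<in>{1..d}. \<alpha> j)"

definition proj_one :: "nat set \<Rightarrow> (nat \<Rightarrow> real) \<Rightarrow> (nat \<Rightarrow> real)" where
  "proj_one u \<alpha> = (\<lambda>j. if j \<in> u then \<alpha> j else 1)"

definition weighted_star_disc :: "nat \<Rightarrow> (nat set \<Rightarrow> real) \<Rightarrow> (nat \<Rightarrow> real) set
                                  \<Rightarrow> ((nat \<Rightarrow> real) \<Rightarrow> real) \<Rightarrow> real" where
  "weighted_star_disc d gw P a =
     Sup {gw u * \<bar>local_disc d P a (proj_one u \<alpha>)\<bar> | \<alpha> u.
            (\<forall>j\<in>{1..d}. 0 \<le> \<alpha> j \<and> \<alpha> j \<le> 1) \<and> u \<noteq> {} \<and> u \<subseteq> {1..d}}"

definition product_weights :: "(nat \<Rightarrow> real) \<Rightarrow> nat set \<Rightarrow> real" where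
  "product_weights \<gamma> u = (\<Prod>j\<in>u. \<gamma> j)"

text \<open>Information complexity N_gamma(eps,d) for centered regular grids
  (minimum as an extended real; +infinity if no grid works).\<close>
definition N_grid :: "(nat set \<Rightarrow> real) \<Rightarrow> real \<Rightarrow> nat \<Rightarrow> ereal" where
  "N_grid gw \<epsilon> d = Inf {ereal (real N) | N. \<exists>m.
       (\<forall>j\<in>{1..d}. m j \<ge> 1) \<and> N = (\<Prod>j\<in>{1..d}. m j) \<and>
       (\<exists>a. weighted_star_disc d gw (centered_grid d m) a \<le> \<epsilon>)}"

definition QPT_grid :: "(nat set \<Rightarrow> real) \<Rightarrow> bool" where
  "QPT_grid gw \<longleftrightarrow> (\<exists>C t. C > 0 \<and> t > 0 \<and>
     (\<forall>d \<ge> 1. \<forall>\<epsilon>. 0 < \<epsilon> \<and> \<epsilon> < 1 \<longrightarrow>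
        N_grid gw \<epsilon> d \<le> ereal (C * exp (t * (1 + ln (real d)) * (1 + ln (1 / \<epsilon>))))))"

definition PT_grid :: "(nat set \<Rightarrow> real) \<Rightarrow> bool" where
  "PT_grid gw \<longleftrightarrow> (\<exists>C \<tau> \<sigma>. C > 0 \<and> \<tau> > 0 \<and> \<sigma> \<ge> 0 \<and>
     (\<forall>d \<ge> 1. \<forall>\<epsilon>. 0 < \<epsilon> \<and> \<epsilon> < 1 \<longrightarrow>
        N_grid gw \<epsilon> d \<le> ereal (C * \<epsilon> powr (-\<tau>) * real d powr \<sigma>)))"

definition SPT_grid :: "(nat set \<Rightarrow> real) \<Rightarrow> bool" where
  "SPT_grid gw \<longleftrightarrow> (\<exists>C \<tau>. C > 0 \<and> \<tau> > 0 \<and>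
     (\<forall>d \<ge> 1. \<forall>\<epsilon>. 0 < \<epsilon> \<and> \<epsilon> < 1 \<longrightarrow>
        N_grid gw \<epsilon> d \<le> ereal (C * \<epsilon> powr (-\<tau>))))"

end

theory Submission
  imports Defs
begin


lemma card_less_real:
  fixes x :: real
  shows "{k::nat. k < m \<and> real k < x} = {..< min m (nat \<lceil>x\<rceil>)}"
proof -
  have eq: "k < nat \<lceil>x\<rceil> \<longleftrightarrow> real k < x" for k :: nat
  proof -
    have "k < nat \<lceil>x\<rceil> \<longleftrightarrow> int k < \<lceil>x\<rceil>" by (rule zless_nat_eq_int_zless)
    also have "\<dots> \<longleftrightarrow> of_int (int k) < x" by (rule less_ceiling_iff)
    finally show ?thesis by simp
  qed
  show ?thesis
    unfolding set_eq_iff mem_Collect_eq lessThan_iff min_less_iff_conj eq by simp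
qed

lemma oneD_bound:
  fixes m :: nat and \<alpha> :: real
  assumes m: "m \<ge> 1" and a0: "0 \<le> \<alpha>" and a1: "\<alpha> \<le> 1"
  shows "\<bar>real (card {k. k < m \<and> (2 * real k + 1) / (2 * real m) < \<alpha>}) / real m - \<alpha>\<bar> \<le> 1 / (2 * real m)"
    and "card {k. k < m \<and> (2 * real k + 1) / (2 * real m) < \<alpha>} \<le> m"
proof -
  define x where "x = real m * \<alpha> - 1/2"
  have mpos: "real m > 0" using m by simp
  have eq: "(2 * real k + 1) / (2 * real m) < \<alpha> \<longleftrightarrow> real k < x" for k
    using mpos by (simp add: x_def field_simps)
  have S: "{k. k < m \<and> (2 * real k + 1) / (2 * real m) < \<alpha>} = {..< min m (nat \<lceil>x\<rceil>)}"
    unfolding eq by (rule card_less_real)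
  show "card {k. k < m \<and> (2 * real k + 1) / (2 * real m) < \<alpha>} \<le> m" unfolding S by simp
  have c1: "x \<le> of_int \<lceil>x\<rceil>" "of_int \<lceil>x\<rceil> < x + 1" by linarith+
  have xge: "x \<ge> -1/2" using a0 mpos by (simp add: x_def)
  hence cge: "\<lceil>x\<rceil> \<ge> 0" by linarith
  show "\<bar>real (card {k. k < m \<and> (2 * real k + 1) / (2 * real m) < \<alpha>}) / real m - \<alpha>\<bar> \<le> 1 / (2 * real m)"
  proof (cases "nat \<lceil>x\<rceil> \<le> m")
    case True
    hence "real (card {k. k < m \<and> (2 * real k + 1) / (2 * real m) < \<alpha>}) = of_int \<lceil>x\<rceil>"
      unfolding S using cge by simp
    moreover have "\<bar>of_int \<lceil>x\<rceil> / real m - \<alpha>\<bar> \<le> 1 / (2 * real m)"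
    proof -
      have "of_int \<lceil>x\<rceil> / real m - \<alpha> = (of_int \<lceil>x\<rceil> - x - 1/2) / real m"
        using mpos by (simp add: x_def field_simps)
      moreover have "\<bar>of_int \<lceil>x\<rceil> - x - 1/2\<bar> \<le> 1/2" using c1 by linarith
      moreover have "\<bar>of_int \<lceil>x\<rceil> - x - 1/2\<bar> / real m \<le> (1/2) / real m"
        using mpos \<open>\<bar>of_int \<lceil>x\<rceil> - x - 1/2\<bar> \<le> 1/2\<close> by (intro divide_right_mono) auto
      ultimately show ?thesis using mpos by (simp add: abs_divide)
    qed
    ultimately show ?thesis by simp
  next
    case False
    hence "m \<le> nat \<lceil>x\<rceil>" by linarith
    hence "real (card {k. k < m \<and> (2 * real k + 1) / (2 * real m) < \<alpha>}) = real m"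
      unfolding S by (simp add: min_absorb1)
    moreover have "real m < x + 1" using False c1 by linarith
    ultimately show ?thesis using mpos a1
      by (simp add: x_def field_simps abs_if)
  qed
qed

lemma prod_diff_le:
  fixes a b :: "'i \<Rightarrow> real"
  assumes "finite I" "\<And>i. i \<in> I \<Longrightarrow> 0 \<le> a i \<and> a i \<le> 1" "\<And>i. i \<in> I \<Longrightarrow> 0 \<le> b i \<and> b i \<le> 1"
  shows "\<bar>(\<Prod>i\<in>I. a i) - (\<Prod>i\<in>I. b i)\<bar> \<le> (\<Sum>i\<in>I. \<bar>a i - b i\<bar>)"
  using assms
proof (induction I rule: finite_induct)
  case empty thus ?case by simp
next
  case (insert j I)
  define A where "A = (\<Prod>i\<in>I. a i)"
  define B where "B = (\<Prod>i\<in>I. b i)"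
  have IH: "\<bar>A - B\<bar> \<le> (\<Sum>i\<in>I. \<bar>a i - b i\<bar>)" using insert unfolding A_def B_def by auto
  have B01: "0 \<le> B \<and> B \<le> 1" unfolding B_def using insert.prems
    by (auto intro!: prod_nonneg prod_le_1)
  have aj: "0 \<le> a j \<and> a j \<le> 1" using insert.prems by auto
  have "a j * A - b j * B = a j * (A - B) + (a j - b j) * B" by algebra
  hence "\<bar>a j * A - b j * B\<bar> \<le> \<bar>a j\<bar> * \<bar>A - B\<bar> + \<bar>a j - b j\<bar> * \<bar>B\<bar>"
    by (metis abs_mult abs_triangle_ineq)
  also have "\<dots> \<le> \<bar>A - B\<bar> + \<bar>a j - b j\<bar>"
    using aj B01 by (intro add_mono) (auto intro: mult_left_le_one_le mult_right_le_one_le)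
  finally show ?case using IH insert.hyps unfolding A_def B_def by simp
qed



lemma finite_grid: "finite (centered_grid d m)"
  unfolding centered_grid_def by (intro finite_imageI finite_PiE) auto

lemma proj_one_01:
  assumes "\<forall>j\<in>{1..d}. 0 \<le> \<alpha> j \<and> \<alpha> j \<le> 1" "j \<in> {1..d}"
  shows "0 \<le> proj_one u \<alpha> j \<and> proj_one u \<alpha> j \<le> 1"
  using assms by (auto simp: proj_one_def)

lemma local_disc_bound:
  assumes "finite P" "\<forall>j\<in>{1..d}. 0 \<le> \<beta> j \<and> \<beta> j \<le> 1"
  shows "\<bar>local_disc d P a \<beta>\<bar> \<le> (\<Sum>x\<in>P. \<bar>a x\<bar>) + 1"
proof -
  have s: "\<bar>\<Sum>x\<in>P. a x * (if (\<forall>j\<in>{1..d}. 0 \<le> x j \<and> x j < \<beta> j) then 1 else 0)\<bar> \<le> (\<Sum>x\<in>P. \<bar>a x\<bar>)"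
    by (rule order.trans[OF sum_abs]) (intro sum_mono, auto)
  have p0: "0 \<le> (\<Prod>j\<in>{1..d}. \<beta> j)" using assms(2) by (intro prod_nonneg) auto
  have p1: "(\<Prod>j\<in>{1..d}. \<beta> j) \<le> 1" using assms(2) by (intro prod_le_1) auto
  have p: "\<bar>\<Prod>j\<in>{1..d}. \<beta> j\<bar> \<le> 1" using p0 p1 by simp
  show ?thesis unfolding local_disc_def using s p by linarith
qed

lemma disc_bdd:
  assumes "finite P" "\<And>u. u \<subseteq> {1..d} \<Longrightarrow> \<bar>gw u\<bar> \<le> 1"
  shows "bdd_above {gw u * \<bar>local_disc d P a (proj_one u \<alpha>)\<bar> | \<alpha> u.
            (\<forall>j\<in>{1..d}. 0 \<le> (\<alpha>::nat\<Rightarrow>real) j \<and> \<alpha> j \<le> 1) \<and> u \<noteq> {} \<and> u \<subseteq> {1..d}}"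
proof (rule bdd_aboveI[where M = "(\<Sum>x\<in>P. \<bar>a x\<bar>) + 1"], clarify)
  fix \<alpha> :: "nat \<Rightarrow> real" and u assume h: "\<forall>j\<in>{1..d}. 0 \<le> \<alpha> j \<and> \<alpha> j \<le> 1" "u \<noteq> {}" "u \<subseteq> {1..d}"
  have L: "\<bar>local_disc d P a (proj_one u \<alpha>)\<bar> \<le> (\<Sum>x\<in>P. \<bar>a x\<bar>) + 1"
    using local_disc_bound[OF assms(1)] proj_one_01[OF h(1)] by blast
  have "gw u * \<bar>local_disc d P a (proj_one u \<alpha>)\<bar> \<le> \<bar>gw u\<bar> * \<bar>local_disc d P a (proj_one u \<alpha>)\<bar>"
    by (intro mult_right_mono) auto
  also have "\<dots> \<le> 1 * \<bar>local_disc d P a (proj_one u \<alpha>)\<bar>"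
    using assms(2)[OF h(3)] by (intro mult_right_mono) auto
  finally show "gw u * \<bar>local_disc d P a (proj_one u \<alpha>)\<bar> \<le> (\<Sum>x\<in>P. \<bar>a x\<bar>) + 1"
    using L by linarith
qed

lemma disc_lower:
  assumes gw: "\<And>u. u \<subseteq> {1..d} \<Longrightarrow> \<bar>gw u\<bar> \<le> 1"
    and m: "\<forall>i\<in>{1..d}. m i \<ge> 1" and j: "j \<in> {1..d}"
  shows "gw {j} / (2 * real (m j)) \<le> weighted_star_disc d gw (centered_grid d m) a"
proof -
  define \<alpha> where "\<alpha> = (\<lambda>i. if i = j then 1 / (2 * real (m j)) else (1::real))"
  have mj: "real (m j) \<ge> 1" using m j by auto
  have \<alpha>01: "\<forall>i\<in>{1..d}. 0 \<le> \<alpha> i \<and> \<alpha> i \<le> 1" using mj by (auto simp: \<alpha>_def)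
  have pj: "proj_one {j} \<alpha> = \<alpha>" by (auto simp: proj_one_def \<alpha>_def)
  have ind: "\<not> (\<forall>i\<in>{1..d}. 0 \<le> x i \<and> x i < \<alpha> i)" if x: "x \<in> centered_grid d m" for x
  proof -
    obtain l where l: "l \<in> PiE {1..d} (\<lambda>j. {..<m j})"
      and xl: "x = (\<lambda>i. if i \<in> {1..d} then (2 * real (l i) + 1) / (2 * real (m i)) else 0)"
      using x unfolding centered_grid_def by auto
    have "x j = (2 * real (l j) + 1) / (2 * real (m j))" using xl j by simp
    also have "\<dots> \<ge> 1 / (2 * real (m j))" using mj by (intro divide_right_mono) auto
    finally have "\<not> x j < \<alpha> j" by (simp add: \<alpha>_def)
    thus ?thesis using j by blast
  qed
  have prodv: "(\<Prod>i\<in>{1..d}. \<alpha> i) = 1 / (2 * real (m j))"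
    using prod.remove[OF finite_atLeastAtMost j, of \<alpha>] by (simp add: \<alpha>_def)
  have ld: "local_disc d (centered_grid d m) a (proj_one {j} \<alpha>) = - (1 / (2 * real (m j)))"
  proof -
    have "(\<Sum>x\<in>centered_grid d m. a x * (if (\<forall>i\<in>{1..d}. 0 \<le> x i \<and> x i < \<alpha> i) then 1 else 0)) = 0"
      by (rule sum.neutral) (use ind in auto)
    thus ?thesis unfolding pj local_disc_def prodv by simp
  qed
  have mem: "gw {j} * \<bar>local_disc d (centered_grid d m) a (proj_one {j} \<alpha>)\<bar> \<in>
      {gw u * \<bar>local_disc d (centered_grid d m) a (proj_one u \<alpha>)\<bar> | \<alpha> u.
            (\<forall>j\<in>{1..d}. 0 \<le> \<alpha> j \<and> \<alpha> j \<le> 1) \<and> u \<noteq> {} \<and> u \<subseteq> {1..d}}"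
    using \<alpha>01 j by blast
  have "gw {j} * \<bar>local_disc d (centered_grid d m) a (proj_one {j} \<alpha>)\<bar> \<le> weighted_star_disc d gw (centered_grid d m) a"
    unfolding weighted_star_disc_def
    by (rule cSup_upper[OF mem disc_bdd[OF finite_grid gw]])
  thus ?thesis unfolding ld using mj by simp
qed



lemma prod_indicator:
  assumes "finite I"
  shows "(if \<forall>j\<in>I. P j then 1 else 0) = (\<Prod>j\<in>I. if P j then 1 else (0::real))"
proof (cases "\<forall>j\<in>I. P j")
  case True thus ?thesis by simp
next
  case False
  then obtain j where "j \<in> I" "\<not> P j" by blast
  hence "(\<Prod>j\<in>I. if P j then 1 else (0::real)) = 0" using assms by (intro prod_zero) auto
  thus ?thesis using False by simp
qed

lemma sum_indicator_card:
  fixes m :: nat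
  shows
  "(\<Sum>k\<in>{..<m}. if P k then 1 else (0::real)) = real (card {k. k < m \<and> P k})"
proof -
  have "(\<Sum>k\<in>{..<m}. if P k then 1 else (0::real)) = (\<Sum>k\<in>{k\<in>{..<m}. P k}. 1)"
    by (rule sum.inter_filter[symmetric]) simp
  also have "{k\<in>{..<m}. P k} = {k. k < m \<and> P k}" by auto
  finally show ?thesis by simp
qed

lemma grid_sum:
  assumes m: "\<forall>i\<in>{1..d}. m i \<ge> 1"
  shows "(\<Sum>x\<in>centered_grid d m. c * (if (\<forall>j\<in>{1..d}. 0 \<le> x j \<and> x j < \<beta> j) then 1 else 0))
    = c * (\<Prod>j\<in>{1..d}. real (card {k. k < m j \<and> (2 * real k + 1) / (2 * real (m j)) < \<beta> j}))"
proof -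
  define I where "I = {1..d::nat}"
  define g where "g = (\<lambda>(l::nat\<Rightarrow>nat) j. if j \<in> I then (2 * real (l j) + 1) / (2 * real (m j)) else 0)"
  define A where "A = PiE I (\<lambda>j. {..<m j})"
  have G: "centered_grid d m = g ` A" unfolding centered_grid_def g_def A_def I_def by simp
  have inj: "inj_on g A"
  proof (rule inj_onI)
    fix l l' assume l: "l \<in> A" and l': "l' \<in> A" and e: "g l = g l'"
    show "l = l'"
    proof (rule PiE_ext[OF l[unfolded A_def] l'[unfolded A_def]])
      fix i assume i: "i \<in> I"
      have "g l i = g l' i" using e by simp
      hence "(2 * real (l i) + 1) / (2 * real (m i)) = (2 * real (l' i) + 1) / (2 * real (m i))"
        using i by (simp add: g_def)
      moreover have "m i \<ge> 1" using m i unfolding I_def by blast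
      hence "real (m i) > 0" by simp
      ultimately show "l i = l' i" by (simp add: field_simps)
    qed
  qed
  have fin: "finite I" by (simp add: I_def)
  have "(\<Sum>x\<in>centered_grid d m. c * (if (\<forall>j\<in>{1..d}. 0 \<le> x j \<and> x j < \<beta> j) then 1 else 0))
      = (\<Sum>l\<in>A. c * (if (\<forall>j\<in>I. 0 \<le> g l j \<and> g l j < \<beta> j) then 1 else 0))"
    unfolding G I_def by (simp add: sum.reindex[OF inj[unfolded I_def]])
  also have "\<dots> = (\<Sum>l\<in>A. c * (\<Prod>j\<in>I. if (2 * real (l j) + 1) / (2 * real (m j)) < \<beta> j then 1 else 0))"
  proof (rule sum.cong[OF refl])
    fix l assume "l \<in> A"
    have "(\<forall>j\<in>I. 0 \<le> g l j \<and> g l j < \<beta> j) \<longleftrightarrow> (\<forall>j\<in>I. (2 * real (l j) + 1) / (2 * real (m j)) < \<beta> j)"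
      by (auto simp: g_def)
    thus "c * (if (\<forall>j\<in>I. 0 \<le> g l j \<and> g l j < \<beta> j) then 1 else 0)
       = c * (\<Prod>j\<in>I. if (2 * real (l j) + 1) / (2 * real (m j)) < \<beta> j then 1 else 0)"
      using prod_indicator[OF fin] by simp
  qed
  also have "\<dots> = c * (\<Sum>l\<in>A. \<Prod>j\<in>I. if (2 * real (l j) + 1) / (2 * real (m j)) < \<beta> j then 1 else 0)"
    by (simp add: sum_distrib_left)
  also have "(\<Sum>l\<in>A. \<Prod>j\<in>I. if (2 * real (l j) + 1) / (2 * real (m j)) < \<beta> j then 1 else 0)
     = (\<Prod>j\<in>I. \<Sum>k\<in>{..<m j}. if (2 * real k + 1) / (2 * real (m j)) < \<beta> j then 1 else (0::real))"
    unfolding A_def by (rule prod_sum_PiE[symmetric]) (use fin in auto)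
  also have "\<dots> = (\<Prod>j\<in>I. real (card {k. k < m j \<and> (2 * real k + 1) / (2 * real (m j)) < \<beta> j}))"
    by (simp add: sum_indicator_card)
  finally show ?thesis unfolding I_def .
qed



lemma pw_01:
  fixes \<gamma> :: "nat \<Rightarrow> real" and u :: "nat set"
  assumes g1: "\<gamma> 1 \<le> 1" and mono: "\<And>i j. 1 \<le> i \<Longrightarrow> i \<le> j \<Longrightarrow> \<gamma> j \<le> \<gamma> i"
    and nn: "\<And>j. 1 \<le> j \<Longrightarrow> 0 \<le> \<gamma> j" and u: "u \<subseteq> {1..d}"
  shows "0 \<le> product_weights \<gamma> u \<and> product_weights \<gamma> u \<le> 1"
proof -
  have "\<forall>j\<in>u. 0 \<le> \<gamma> j \<and> \<gamma> j \<le> 1"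
  proof
    fix j assume "j \<in> u" hence j: "1 \<le> j" using u by auto
    show "0 \<le> \<gamma> j \<and> \<gamma> j \<le> 1" using nn[OF j] mono[of 1 j] j g1 by auto
  qed
  thus ?thesis unfolding product_weights_def by (auto intro: prod_nonneg prod_le_1)
qed

lemma upper:
  fixes \<gamma> :: "nat \<Rightarrow> real"
  assumes g1: "\<gamma> 1 \<le> 1" and mono: "\<And>i j. 1 \<le> i \<Longrightarrow> i \<le> j \<Longrightarrow> \<gamma> j \<le> \<gamma> i"
    and nn: "\<And>j. 1 \<le> j \<Longrightarrow> 0 \<le> \<gamma> j"
    and tau: "\<tau> \<ge> 1" and zero: "\<forall>j > \<tau>. \<gamma> j = 0"
    and eps: "0 < \<epsilon>" and d: "d \<ge> 1"
    and M: "M = nat \<lceil>real \<tau> / \<epsilon>\<rceil>" and m: "m = (\<lambda>j. if j \<le> \<tau> then M else 1)"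
  shows "weighted_star_disc d (product_weights \<gamma>) (centered_grid d m)
           (\<lambda>x. 1 / real (\<Prod>j\<in>{1..d}. m j)) \<le> \<epsilon>"
proof -
  define I where "I = {1..d}"
  have Mge: "real M \<ge> real \<tau> / \<epsilon>" unfolding M by linarith
  have tpos: "real \<tau> / \<epsilon> > 0" using tau eps by simp
  hence M1: "M \<ge> 1" unfolding M by linarith
  have m1: "\<forall>i\<in>{1..d}. m i \<ge> 1" using M1 by (auto simp: m)
  define S where "S = {product_weights \<gamma> u * \<bar>local_disc d (centered_grid d m) (\<lambda>x. 1 / real (\<Prod>j\<in>{1..d}. m j)) (proj_one u \<alpha>)\<bar> | \<alpha> u.
            (\<forall>j\<in>{1..d}. 0 \<le> \<alpha> j \<and> \<alpha> j \<le> 1) \<and> u \<noteq> {} \<and> u \<subseteq> {1..d}}"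
  have ne: "S \<noteq> {}"
  proof -
    have "product_weights \<gamma> {1} * \<bar>local_disc d (centered_grid d m) (\<lambda>x. 1 / real (\<Prod>j\<in>{1..d}. m j)) (proj_one {1} (\<lambda>_. 0))\<bar> \<in> S"
      unfolding S_def using d by force
    thus ?thesis by blast
  qed
  have bound: "s \<le> \<epsilon>" if "s \<in> S" for s
  proof -
    obtain \<alpha> u where s: "s = product_weights \<gamma> u * \<bar>local_disc d (centered_grid d m) (\<lambda>x. 1 / real (\<Prod>j\<in>{1..d}. m j)) (proj_one u \<alpha>)\<bar>"
      and \<alpha>: "\<forall>j\<in>{1..d}. 0 \<le> \<alpha> j \<and> \<alpha> j \<le> 1" and u: "u \<noteq> {}" "u \<subseteq> {1..d}"
      using \<open>s \<in> S\<close> unfolding S_def by blast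
    define \<beta> where "\<beta> = proj_one u \<alpha>"
    have \<beta>01: "\<And>j. j \<in> I \<Longrightarrow> 0 \<le> \<beta> j \<and> \<beta> j \<le> 1"
      unfolding \<beta>_def I_def using proj_one_01[OF \<alpha>] by blast
    have w: "0 \<le> product_weights \<gamma> u \<and> product_weights \<gamma> u \<le> 1"
      using pw_01[of \<gamma>, OF g1 mono nn u(2)] by blast
    show ?thesis
    proof (cases "\<exists>j\<in>u. \<gamma> j = 0")
      case True
      hence "product_weights \<gamma> u = 0" unfolding product_weights_def
        using u(2) by (intro prod_zero) (auto intro: finite_subset)
      thus ?thesis using s eps by simp
    next
      case False
      hence uT: "\<And>j. j \<in> u \<Longrightarrow> j \<le> \<tau>" using zero by (meson not_le)
      define c where "c = (\<lambda>j. real (card {k. k < m j \<and> (2 * real k + 1) / (2 * real (m j)) < \<beta> j}))"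
      define f where "f = (\<lambda>j. c j / real (m j))"
      have ld: "local_disc d (centered_grid d m) (\<lambda>x. 1 / real (\<Prod>j\<in>{1..d}. m j)) \<beta>
          = (\<Prod>j\<in>I. f j) - (\<Prod>j\<in>I. \<beta> j)"
      proof -
        have "local_disc d (centered_grid d m) (\<lambda>x. 1 / real (\<Prod>j\<in>{1..d}. m j)) \<beta>
           = 1 / real (\<Prod>j\<in>I. m j) * (\<Prod>j\<in>I. c j) - (\<Prod>j\<in>I. \<beta> j)"
          unfolding local_disc_def grid_sum[OF m1] c_def I_def by simp
        also have "1 / real (\<Prod>j\<in>I. m j) * (\<Prod>j\<in>I. c j) = (\<Prod>j\<in>I. f j)"
          unfolding f_def by (simp add: prod_dividef)
        finally show ?thesis .
      qed
      have f01: "0 \<le> f j \<and> f j \<le> 1" if j: "j \<in> I" for j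
      proof -
        have mj: "m j \<ge> 1" using m1 j unfolding I_def by blast
        have "card {k. k < m j \<and> (2 * real k + 1) / (2 * real (m j)) < \<beta> j} \<le> m j"
          using oneD_bound(2)[OF mj, of "\<beta> j"] \<beta>01[OF j] by blast
        thus ?thesis using mj unfolding f_def c_def by (simp add: field_simps)
      qed
      have fb: "\<bar>f j - \<beta> j\<bar> \<le> (if j \<in> u then 1 / (2 * real M) else 0)" if j: "j \<in> I" for j
      proof (cases "j \<in> u")
        case True
        hence mj: "m j = M" using uT[OF True] by (simp add: m)
        show ?thesis using oneD_bound(1)[OF M1, of "\<beta> j"] \<beta>01[OF j] True
          unfolding f_def c_def mj by simp
      next
        case False
        hence b1: "\<beta> j = 1" by (simp add: \<beta>_def proj_one_def)
        have mj: "m j \<ge> 1" using m1 j unfolding I_def by blast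
        have "{k. k < m j \<and> (2 * real k + 1) / (2 * real (m j)) < \<beta> j} = {..<m j}"
        proof -
          have "(2 * real k + 1) / (2 * real (m j)) < 1" if "k < m j" for k
          proof -
            have "2 * real k + 1 < 2 * real (m j)" using that by linarith
            thus ?thesis using mj by (simp add: field_simps)
          qed
          thus ?thesis using b1 by auto
        qed
        hence "f j = 1" using mj unfolding f_def c_def by simp
        thus ?thesis using b1 False by simp
      qed
      have "\<bar>(\<Prod>j\<in>I. f j) - (\<Prod>j\<in>I. \<beta> j)\<bar> \<le> (\<Sum>j\<in>I. \<bar>f j - \<beta> j\<bar>)"
        by (rule prod_diff_le) (use f01 \<beta>01 in \<open>auto simp: I_def\<close>)
      also have "\<dots> \<le> (\<Sum>j\<in>I. if j \<in> u then 1 / (2 * real M) else 0)"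
        by (rule sum_mono) (rule fb)
      also have "\<dots> = (\<Sum>j\<in>u. 1 / (2 * real M))"
        using u(2) unfolding I_def by (simp add: sum.If_cases Int_absorb1)
      also have "\<dots> = real (card u) / (2 * real M)" by simp
      also have "\<dots> \<le> real \<tau> / (2 * real M)"
      proof -
        have "u \<subseteq> {1..\<tau>}" using uT u(2) by auto
        hence "card u \<le> \<tau>" using card_mono[of "{1..\<tau>}" u] by simp
        thus ?thesis using M1 by (simp add: divide_right_mono)
      qed
      also have "\<dots> \<le> \<epsilon>"
      proof -
        have "real \<tau> \<le> \<epsilon> * real M" using Mge eps by (simp add: field_simps)
        thus ?thesis using M1 eps by (simp add: field_simps)
      qed
      finally have D: "\<bar>local_disc d (centered_grid d m) (\<lambda>x. 1 / real (\<Prod>j\<in>{1..d}. m j)) \<beta>\<bar> \<le> \<epsilon>"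
        unfolding ld .
      have "s \<le> 1 * \<bar>local_disc d (centered_grid d m) (\<lambda>x. 1 / real (\<Prod>j\<in>{1..d}. m j)) \<beta>\<bar>"
        unfolding s \<beta>_def using w by (intro mult_right_mono) auto
      thus ?thesis using D by simp
    qed
  qed
  show ?thesis unfolding weighted_star_disc_def S_def[symmetric]
    by (rule cSup_least[OF ne bound])
qed



lemma exists_big_d:
  fixes t :: real assumes t: "t > 0"
  shows "\<exists>d::nat. d \<ge> 1 \<and> real d > t * (1 + ln (real d))"
proof -
  define n :: nat where "n = nat \<lceil>2 * t + 1\<rceil>"
  have n: "real n \<ge> 2 * t + 1" unfolding n_def by linarith
  hence n1: "real n \<ge> 1" using t by linarith
  have "ln (real n) \<le> real n - 1" using n1 by (intro ln_le_minus_one) auto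
  have lnd: "ln (real (n^2)) = 2 * ln (real n)" using n1 by (simp add: ln_realpow)
  have "t * (1 + ln (real (n^2))) \<le> t * (1 + 2 * (real n - 1))"
    unfolding lnd using \<open>ln (real n) \<le> real n - 1\<close> t by (intro mult_left_mono) auto
  also have "\<dots> < real n * real n"
  proof -
    have "real n * real n \<ge> real n * (2 * t + 1)" using n n1 by (intro mult_left_mono) auto
    thus ?thesis using t n1 by (simp add: algebra_simps)
  qed
  finally have "t * (1 + ln (real (n^2))) < real (n^2)" by (simp add: power2_eq_square)
  moreover have "n^2 \<ge> 1" using n1 by simp
  ultimately show ?thesis by blast
qed

lemma SPT_PT: "SPT_grid gw \<Longrightarrow> PT_grid gw"
  unfolding SPT_grid_def PT_grid_def
proof (elim exE conjE)
  fix C \<tau> assume C: "C > 0" "\<tau> > 0" and H: "\<forall>d\<ge>1. \<forall>\<epsilon>. 0 < \<epsilon> \<and> \<epsilon> < 1 \<longrightarrow> N_grid gw \<epsilon> d \<le> ereal (C * \<epsilon> powr - \<tau>)"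
  show "\<exists>C \<tau> \<sigma>. 0 < C \<and> 0 < \<tau> \<and> 0 \<le> \<sigma> \<and> (\<forall>d\<ge>1. \<forall>\<epsilon>. 0 < \<epsilon> \<and> \<epsilon> < 1 \<longrightarrow> N_grid gw \<epsilon> d \<le> ereal (C * \<epsilon> powr - \<tau> * real d powr \<sigma>))"
    by (rule exI[of _ C], rule exI[of _ \<tau>], rule exI[of _ 0]) (use C H in auto)
qed

lemma PT_QPT: "PT_grid gw \<Longrightarrow> QPT_grid gw"
  unfolding PT_grid_def QPT_grid_def
proof (elim exE conjE)
  fix C \<tau> \<sigma> :: real assume C: "C > 0" "\<tau> > 0" "\<sigma> \<ge> 0"
    and H: "\<forall>d\<ge>1. \<forall>\<epsilon>. 0 < \<epsilon> \<and> \<epsilon> < 1 \<longrightarrow> N_grid gw \<epsilon> d \<le> ereal (C * \<epsilon> powr - \<tau> * real d powr \<sigma>)"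
  define t where "t = max \<tau> \<sigma>"
  have t: "t > 0" "t \<ge> \<tau>" "t \<ge> \<sigma>" using C by (auto simp: t_def)
  have "N_grid gw \<epsilon> d \<le> ereal (C * exp (t * (1 + ln (real d)) * (1 + ln (1 / \<epsilon>))))"
    if d: "d \<ge> 1" and e: "0 < \<epsilon>" "\<epsilon> < 1" for d \<epsilon>
  proof -
    define a where "a = ln (real d)"
    define b where "b = ln (1 / \<epsilon>)"
    have a0: "a \<ge> 0" using d by (simp add: a_def)
    have b0: "b \<ge> 0" using e by (simp add: b_def)
    have e1: "\<epsilon> powr - \<tau> = exp (\<tau> * b)" using e
      by (simp add: powr_def b_def ln_div)
    have d1: "real d powr \<sigma> = exp (\<sigma> * a)" using d by (simp add: powr_def a_def)
    have ineq: "\<tau> * b + \<sigma> * a \<le> t * (1 + a) * (1 + b)"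
    proof -
      have "\<tau> * b \<le> t * b" using t b0 by (intro mult_right_mono) auto
      moreover have "\<sigma> * a \<le> t * a" using t a0 by (intro mult_right_mono) auto
      moreover have "0 \<le> t * (1 + a * b)" using t a0 b0 by simp
      ultimately show ?thesis by (simp add: algebra_simps)
    qed
    have "C * \<epsilon> powr - \<tau> * real d powr \<sigma> = C * exp (\<tau> * b + \<sigma> * a)"
      unfolding e1 d1 by (simp add: exp_add)
    also have "\<dots> \<le> C * exp (t * (1 + a) * (1 + b))"
      using ineq C by simp
    finally have "C * \<epsilon> powr - \<tau> * real d powr \<sigma> \<le> C * exp (t * (1 + ln (real d)) * (1 + ln (1 / \<epsilon>)))"
      by (simp add: a_def b_def)
    moreover have "N_grid gw \<epsilon> d \<le> ereal (C * \<epsilon> powr - \<tau> * real d powr \<sigma>)" using H d e by blast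
    ultimately show ?thesis using order.trans ereal_less_eq(3) by blast
  qed
  thus "\<exists>C t. 0 < C \<and> 0 < t \<and> (\<forall>d\<ge>1. \<forall>\<epsilon>. 0 < \<epsilon> \<and> \<epsilon> < 1 \<longrightarrow> N_grid gw \<epsilon> d \<le> ereal (C * exp (t * (1 + ln (real d)) * (1 + ln (1 / \<epsilon>)))))"
    using C t by blast
qed



lemma zero_SPT:
  fixes \<gamma> :: "nat \<Rightarrow> real"
  assumes g1: "\<gamma> 1 \<le> 1" and mono: "\<And>i j. 1 \<le> i \<Longrightarrow> i \<le> j \<Longrightarrow> \<gamma> j \<le> \<gamma> i"
    and nn: "\<And>j. 1 \<le> j \<Longrightarrow> 0 \<le> \<gamma> j"
    and ex: "\<exists>\<tau>::nat. \<forall>j > \<tau>. \<gamma> j = 0"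
  shows "SPT_grid (product_weights \<gamma>)"
proof -
  obtain \<tau>0 :: nat where z0: "\<forall>j > \<tau>0. \<gamma> j = 0" using ex by blast
  define \<tau> where "\<tau> = \<tau>0 + 1"
  have tau: "\<tau> \<ge> 1" by (simp add: \<tau>_def)
  have zero: "\<forall>j > \<tau>. \<gamma> j = 0" using z0 by (simp add: \<tau>_def)
  define C where "C = (2 * real \<tau>) ^ \<tau>"
  have Cpos: "C > 0" using tau by (simp add: C_def)
  have main: "N_grid (product_weights \<gamma>) \<epsilon> d \<le> ereal (C * \<epsilon> powr - real \<tau>)"
    if d: "d \<ge> 1" and e: "0 < \<epsilon>" "\<epsilon> < 1" for d \<epsilon>
  proof -
    define M where "M = nat \<lceil>real \<tau> / \<epsilon>\<rceil>"
    define m where "m = (\<lambda>j. if j \<le> \<tau> then M else (1::nat))"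
    define N where "N = (\<Prod>j\<in>{1..d}. m j)"
    have tpos: "real \<tau> / \<epsilon> \<ge> 1" using tau e by (simp add: field_simps)
    hence M1: "M \<ge> 1" unfolding M_def by linarith
    have Mle: "real M \<le> 2 * real \<tau> / \<epsilon>"
    proof -
      have "real M < real \<tau> / \<epsilon> + 1" unfolding M_def using tpos by linarith
      moreover have "2 * real \<tau> / \<epsilon> = real \<tau> / \<epsilon> + real \<tau> / \<epsilon>" by simp
      ultimately show ?thesis using tpos by linarith
    qed
    have disc: "weighted_star_disc d (product_weights \<gamma>) (centered_grid d m) (\<lambda>x. 1 / real N) \<le> \<epsilon>"
      unfolding N_def by (rule upper[OF g1 mono nn tau zero e(1) d M_def m_def])
    have m1: "\<forall>j\<in>{1..d}. m j \<ge> 1" using M1 by (auto simp: m_def)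
    have "ereal (real N) \<in> {ereal (real N) | N. \<exists>m.
       (\<forall>j\<in>{1..d}. m j \<ge> 1) \<and> N = (\<Prod>j\<in>{1..d}. m j) \<and>
       (\<exists>a. weighted_star_disc d (product_weights \<gamma>) (centered_grid d m) a \<le> \<epsilon>)}"
      using m1 disc N_def by blast
    hence "N_grid (product_weights \<gamma>) \<epsilon> d \<le> ereal (real N)"
      unfolding N_grid_def by (rule Inf_lower)
    moreover have "real N \<le> C * \<epsilon> powr - real \<tau>"
    proof -
      have "N = (\<Prod>j\<in>{1..d} \<inter> {j. j \<le> \<tau>}. M) * (\<Prod>j\<in>{1..d} \<inter> - {j. j \<le> \<tau>}. 1)"
        unfolding N_def m_def by (rule prod.If_cases) simp
      hence "N = M ^ card ({1..d} \<inter> {j. j \<le> \<tau>})" by simp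
      moreover have "card ({1..d} \<inter> {j. j \<le> \<tau>}) \<le> \<tau>"
      proof -
        have "{1..d} \<inter> {j. j \<le> \<tau>} \<subseteq> {1..\<tau>}" by auto
        from card_mono[OF _ this] show ?thesis by simp
      qed
      ultimately have "N \<le> M ^ \<tau>" using M1 by (simp add: power_increasing)
      hence "real N \<le> real M ^ \<tau>" by (metis of_nat_le_iff of_nat_power)
      also have "\<dots> \<le> (2 * real \<tau> / \<epsilon>) ^ \<tau>" using Mle by (intro power_mono) auto
      also have "\<dots> = C * \<epsilon> powr - real \<tau>"
        using e by (simp add: C_def powr_minus powr_realpow power_divide divide_inverse power_mult_distrib power_inverse)
      finally show ?thesis .
    qed
    ultimately show ?thesis using order.trans ereal_less_eq(3) by blast
  qed
  show ?thesis unfolding SPT_grid_def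
    by (rule exI[of _ C], rule exI[of _ "real \<tau>"]) (use Cpos tau main in auto)
qed



lemma QPT_zero:
  fixes \<gamma> :: "nat \<Rightarrow> real"
  assumes g1: "\<gamma> 1 \<le> 1" and mono: "\<And>i j. 1 \<le> i \<Longrightarrow> i \<le> j \<Longrightarrow> \<gamma> j \<le> \<gamma> i"
    and nn: "\<And>j. 1 \<le> j \<Longrightarrow> 0 \<le> \<gamma> j"
    and Q: "QPT_grid (product_weights \<gamma>)"
  shows "\<exists>\<tau>::nat. \<forall>j > \<tau>. \<gamma> j = 0"
proof (rule ccontr)
  assume nz: "\<not> (\<exists>\<tau>::nat. \<forall>j > \<tau>. \<gamma> j = 0)"
  have pos: "\<gamma> j > 0" if j: "j \<ge> 1" for j
  proof -
    obtain j' where j': "j' > j" "\<gamma> j' \<noteq> 0" using nz by blast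
    have "\<gamma> j' \<le> \<gamma> j" using mono[of j j'] j j' by simp
    moreover have "\<gamma> j' \<ge> 0" using nn[of j'] j j' by simp
    ultimately show ?thesis using j' by simp
  qed
  obtain C t where Ct: "C > 0" "t > 0" and H: "\<forall>d \<ge> 1. \<forall>\<epsilon>. 0 < \<epsilon> \<and> \<epsilon> < 1 \<longrightarrow>
        N_grid (product_weights \<gamma>) \<epsilon> d \<le> ereal (C * exp (t * (1 + ln (real d)) * (1 + ln (1 / \<epsilon>))))"
    using Q unfolding QPT_grid_def by blast
  obtain d :: nat where d: "d \<ge> 1" "real d > t * (1 + ln (real d))" using exists_big_d[OF Ct(2)] by blast
  define K where "K = t * (1 + ln (real d))"
  define c where "c = \<gamma> d"
  have c: "c > 0" using pos d by (simp add: c_def)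
  define \<delta> where "\<delta> = real d - K"
  have \<delta>: "\<delta> > 0" using d by (simp add: \<delta>_def K_def)
  define R where "R = ln C + K - real d * ln (c / 2)"
  define L where "L = max R 0 / \<delta> + 1"
  have L: "L > 0" "\<delta> * L > R"
  proof -
    have "max R 0 / \<delta> \<ge> 0" using \<delta> by simp
    thus "L > 0" by (simp add: L_def)
    have "\<delta> * L = max R 0 + \<delta>" using \<delta> by (simp add: L_def field_simps)
    thus "\<delta> * L > R" using \<delta> by linarith
  qed
  define \<epsilon> where "\<epsilon> = exp (- L)"
  have e: "0 < \<epsilon>" "\<epsilon> < 1" using L by (auto simp: \<epsilon>_def)
  have lne: "ln (1 / \<epsilon>) = L" by (simp add: \<epsilon>_def ln_div)
  have up: "N_grid (product_weights \<gamma>) \<epsilon> d \<le> ereal (C * exp (K * (1 + L)))"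
    using H d e unfolding K_def lne[symmetric] by blast
  have low: "ereal ((c / (2 * \<epsilon>)) ^ d) \<le> N_grid (product_weights \<gamma>) \<epsilon> d"
    unfolding N_grid_def
  proof (rule Inf_greatest, clarify)
    fix m :: "nat \<Rightarrow> nat" and a
    assume m1: "\<forall>j\<in>{1..d}. 1 \<le> m j"
      and disc: "weighted_star_disc d (product_weights \<gamma>) (centered_grid d m) a \<le> \<epsilon>"
    have gw: "\<And>u. u \<subseteq> {1..d} \<Longrightarrow> \<bar>product_weights \<gamma> u\<bar> \<le> 1"
      using pw_01[of \<gamma>, OF g1 mono nn] by (metis abs_of_nonneg)
    have mj: "c / (2 * \<epsilon>) \<le> real (m j)" if j: "j \<in> {1..d}" for j
    proof -
      have "product_weights \<gamma> {j} / (2 * real (m j)) \<le> \<epsilon>"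
        using disc_lower[where a=a and gw="product_weights \<gamma>", OF gw m1 j] disc by linarith
      hence "\<gamma> j / (2 * real (m j)) \<le> \<epsilon>" by (simp add: product_weights_def)
      moreover have "real (m j) \<ge> 1" using m1 j by auto
      ultimately have "\<gamma> j \<le> \<epsilon> * (2 * real (m j))" by (simp add: field_simps)
      moreover have "c \<le> \<gamma> j" using mono[of j d] j by (simp add: c_def)
      ultimately have "c \<le> 2 * \<epsilon> * real (m j)" by simp
      thus ?thesis using e by (simp add: field_simps)
    qed
    have "(c / (2 * \<epsilon>)) ^ d = (\<Prod>j\<in>{1..d}. c / (2 * \<epsilon>))" by simp
    also have "\<dots> \<le> (\<Prod>j\<in>{1..d}. real (m j))"
      by (rule prod_mono) (use mj c e in auto)
    finally show "ereal ((c / (2 * \<epsilon>)) ^ d) \<le> ereal (real (\<Prod>j\<in>{1..d}. m j))" by simp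
  qed
  have ineq: "(c / (2 * \<epsilon>)) ^ d \<le> C * exp (K * (1 + L))"
    using order.trans[OF low up] by simp
  have pos1: "(c / (2 * \<epsilon>)) ^ d > 0" using c e by simp
  have "ln ((c / (2 * \<epsilon>)) ^ d) \<le> ln (C * exp (K * (1 + L)))"
    using ineq pos1 by simp
  moreover have "ln ((c / (2 * \<epsilon>)) ^ d) = real d * (ln (c / 2) + L)"
  proof -
    have "c / (2 * \<epsilon>) = (c / 2) * exp L" using e by (simp add: \<epsilon>_def exp_minus field_simps)
    hence "ln (c / (2 * \<epsilon>)) = ln ((c / 2) * exp L)" by (simp only:)
    also have "(c / 2) * exp L = exp (ln (c / 2) + L)" using c by (simp add: exp_add)
    finally have "ln (c / (2 * \<epsilon>)) = ln (c / 2) + L" by simp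
    thus ?thesis using c e by (simp add: ln_realpow)
  qed
  moreover have "ln (C * exp (K * (1 + L))) = ln C + K * (1 + L)" using Ct by (simp add: ln_mult)
  ultimately have "real d * (ln (c / 2) + L) \<le> ln C + K * (1 + L)" by simp
  hence "\<delta> * L \<le> R" unfolding \<delta>_def R_def by (simp add: algebra_simps)
  thus False using L by simp
qed

theorem theorem2:
  fixes \<gamma> :: "nat \<Rightarrow> real"
  assumes "\<gamma> 1 \<le> 1"
    and "\<And>i j. 1 \<le> i \<Longrightarrow> i \<le> j \<Longrightarrow> \<gamma> j \<le> \<gamma> i"
    and "\<And>j. 1 \<le> j \<Longrightarrow> 0 \<le> \<gamma> j"
  shows "(QPT_grid (product_weights \<gamma>) \<longleftrightarrow> PT_grid (product_weights \<gamma>)) \<and>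
         (PT_grid (product_weights \<gamma>) \<longleftrightarrow> SPT_grid (product_weights \<gamma>)) \<and>
         (SPT_grid (product_weights \<gamma>) \<longleftrightarrow> (\<exists>\<tau>::nat. \<forall>j > \<tau>. \<gamma> j = 0))"
  using QPT_zero[of \<gamma>, OF assms] zero_SPT[of \<gamma>, OF assms] SPT_PT PT_QPT by blast

end
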